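(* Fix $\epsilon>8n^{-1/2}$. There is a hyperplane $\mathbf{H}\subseteq\mathbb{R}^n$ and a set $S\subseteq\{-1,1\}^n$ with $|S|\ge\frac{\epsilon}{8}2^n$ such that both of the following hold: (i) every $x\in S$ has Euclidean distance $d(x,\mathbf{H})\le 2\epsilon n^{-1/2}$; and (ii) there is no hyperplane $\mathbf{H}'$ which passes through all the points in $S$.
   Context: $d(x,\mathbf{H})$ denotes the Euclidean distance from the point $x$ to the hyperplane $\mathbf{H}$; a hyperplane is an affine subspace of $\mathbb{R}^n$ of dimension $n-1$. *)

theory Defs
  imports "HOL-Analysis.Analysis"
begin

definition is_hyperplane :: "(real ^ 'n) set \<Rightarrow> bool" where
  "is_hyperplane H \<longleftrightarrow> affine H \<and> aff_dim H = int CARD('n) - 1"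

definition sign_cube :: "(real ^ 'n) set" where
  "sign_cube = {x. \<forall>i. x $ i = 1 \<or> x $ i = -1}"

end

theory Submission
  imports Defs
begin


lemma sum_k_sq: "4 * (\<Sum>k\<le>m. k^2 * (m choose k)) = m*(m+1)*2^m"
proof (cases m)
  case 0 then show ?thesis by simp
next
  case (Suc n)
  have "(\<Sum>k\<le>Suc n. k^2 * (Suc n choose k)) = (\<Sum>j\<le>n. (Suc j)^2 * (Suc n choose Suc j))"
    unfolding sum.atMost_Suc_shift by (simp del: binomial_Suc_Suc)
  also have "\<dots> = (\<Sum>j\<le>n. Suc n * (Suc j * (n choose j)))"
  proof (rule sum.cong[OF refl])
    fix j
    have "(Suc j)^2 * (Suc n choose Suc j) = Suc j * (Suc j * (Suc n choose Suc j))"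
      by (simp only: power2_eq_square mult.assoc)
    also have "\<dots> = Suc j * (Suc n * (n choose j))" by (simp only: Suc_times_binomial)
    finally show "(Suc j)^2 * (Suc n choose Suc j) = Suc n * (Suc j * (n choose j))" by (metis mult.left_commute)
  qed
  also have "\<dots> = Suc n * ((\<Sum>j\<le>n. j * (n choose j)) + (\<Sum>j\<le>n. n choose j))"
    by (simp add: sum_distrib_left sum.distrib algebra_simps)
  also have "\<dots> = Suc n * (n * 2^(n-1) + 2^n)"
    by (simp add: choose_linear_sum choose_row_sum)
  finally have e: "(\<Sum>k\<le>Suc n. k^2 * (Suc n choose k)) = Suc n * (n * 2^(n-1) + 2^n)" .
  have "4 * (n * 2^(n-1)) = 2 * n * 2^n"
    by (cases n) auto
  show ?thesis unfolding Suc e by (cases n) (simp_all add: algebra_simps)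
qed

lemma cheb_sum: "(\<Sum>k\<le>m. real (m choose k) * (real m - 2 * real k)^2) = real m * 2^m"
proof -
  have l: "2 * (\<Sum>k\<le>m. k * (m choose k)) = m * 2^m"
    by (cases m) (auto simp: choose_linear_sum)
  have l': "2 * (\<Sum>k\<le>m. real k * real (m choose k)) = real m * 2^m"
    using arg_cong[OF l, of real] by simp
  have q': "4 * (\<Sum>k\<le>m. (real k)^2 * real (m choose k)) = real m * (real m + 1) * 2^m"
    using arg_cong[OF sum_k_sq[of m], of real] by (simp add: ring_distribs)
  have "(\<Sum>k\<le>m. real (m choose k) * (real m - 2 * real k)^2) =
     (real m)^2 * (\<Sum>k\<le>m. real (m choose k)) - 2 * real m * (2 * (\<Sum>k\<le>m. real k * real (m choose k)))
      + 4 * (\<Sum>k\<le>m. (real k)^2 * real (m choose k))"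
    by (simp add: power2_eq_square algebra_simps sum_distrib_left sum_subtractf sum.distrib)
  also have "(\<Sum>k\<le>m. real (m choose k)) = 2^m"
    using arg_cong[OF choose_row_sum[of m], of real] by simp
  finally show ?thesis using l' q' by (simp add: power2_eq_square algebra_simps)
qed

lemma binom_sym_mono:
  assumes "k \<le> m" "j \<le> m" "\<bar>real m - 2*real k\<bar> \<le> \<bar>real m - 2*real j\<bar>"
  shows "m choose j \<le> m choose k"
proof -
  define k' where "k' = (if m \<le> 2*k then k else m - k)"
  define j' where "j' = (if m \<le> 2*j then j else m - j)"
  have ck: "m choose k = m choose k'" using binomial_symmetric[OF assms(1)] by (simp add: k'_def)
  have cj: "m choose j = m choose j'" using binomial_symmetric[OF assms(2)] by (simp add: j'_def)
  have ak: "\<bar>real m - 2*real k\<bar> = 2*real k' - real m" using assms(1) by (auto simp: k'_def of_nat_diff)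
  have aj: "\<bar>real m - 2*real j\<bar> = 2*real j' - real m" using assms(2) by (auto simp: j'_def of_nat_diff)
  have "k' \<le> j'" using assms(3) ak aj by simp
  moreover have "m div 2 \<le> k'" "j' \<le> m" using assms(1,2) by (auto simp: k'_def j'_def)
  ultimately show ?thesis using binomial_antimono[of k' j' m] ck cj by simp
qed

lemma card_nat_interval_le:
  assumes "K \<subseteq> {k::nat. lo \<le> real k \<and> real k \<le> hi}" "lo \<le> hi"
  shows "real (card K) \<le> hi - lo + 1"
proof (cases "K = {}")
  case True then show ?thesis using assms by simp
next
  case False
  then obtain k0 where k0: "k0 \<in> K" by auto
  have sub: "K \<subseteq> {nat \<lceil>lo\<rceil>..nat \<lfloor>hi\<rfloor>}"
  proof
    fix k assume "k \<in> K"
    then have "lo \<le> real k" "real k \<le> hi" using assms by auto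
    then show "k \<in> {nat \<lceil>lo\<rceil>..nat \<lfloor>hi\<rfloor>}" by (auto simp: le_nat_iff nat_le_iff le_floor_iff ceiling_le_iff)
  qed
  have "card K \<le> card {nat \<lceil>lo\<rceil>..nat \<lfloor>hi\<rfloor>}" by (rule card_mono[OF _ sub]) simp
  also have "\<dots> = nat \<lfloor>hi\<rfloor> + 1 - nat \<lceil>lo\<rceil>" by simp
  finally have c: "card K \<le> nat \<lfloor>hi\<rfloor> + 1 - nat \<lceil>lo\<rceil>" .
  have "k0 \<in> {nat \<lceil>lo\<rceil>..nat \<lfloor>hi\<rfloor>}" using sub k0 by auto
  then have le: "nat \<lceil>lo\<rceil> \<le> nat \<lfloor>hi\<rfloor>" by auto
  have "real k0 \<le> hi" using k0 assms(1) by auto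
  then have h0: "0 \<le> \<lfloor>hi\<rfloor>" by (simp add: le_floor_iff)
  have c2: "card K + nat \<lceil>lo\<rceil> \<le> nat \<lfloor>hi\<rfloor> + 1" using c le by linarith
  have "real (card K + nat \<lceil>lo\<rceil>) \<le> real (nat \<lfloor>hi\<rfloor> + 1)" using c2 by (simp only: of_nat_le_iff)
  then have "real (card K) + real (nat \<lceil>lo\<rceil>) \<le> real (nat \<lfloor>hi\<rfloor>) + 1" unfolding of_nat_add of_nat_1 .
  then have "real (card K) \<le> real (nat \<lfloor>hi\<rfloor>) + 1 - real (nat \<lceil>lo\<rceil>)" by linarith
  moreover have "real (nat \<lfloor>hi\<rfloor>) \<le> hi" using h0 by linarith
  moreover have "lo \<le> real (nat \<lceil>lo\<rceil>)" by linarith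
  ultimately show ?thesis by linarith
qed

lemma card_nat_interval_ge:
  assumes "0 \<le> lo" "lo \<le> hi"
  shows "hi - lo - 1 \<le> real (card {k::nat. lo \<le> real k \<and> real k \<le> hi})"
proof -
  have fin: "finite {k::nat. lo \<le> real k \<and> real k \<le> hi}"
    by (rule finite_subset[of _ "{..nat \<lfloor>hi\<rfloor>}"]) (auto simp: le_nat_iff le_floor_iff)
  have sub: "{nat \<lceil>lo\<rceil>..nat \<lfloor>hi\<rfloor>} \<subseteq> {k::nat. lo \<le> real k \<and> real k \<le> hi}"
  proof
    fix k assume "k \<in> {nat \<lceil>lo\<rceil>..nat \<lfloor>hi\<rfloor>}"
    then have "nat \<lceil>lo\<rceil> \<le> k" "k \<le> nat \<lfloor>hi\<rfloor>" by auto
    then have "real (nat \<lceil>lo\<rceil>) \<le> real k" "real k \<le> real (nat \<lfloor>hi\<rfloor>)" by simp_all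
    moreover have "lo \<le> real (nat \<lceil>lo\<rceil>)" "real (nat \<lfloor>hi\<rfloor>) \<le> hi" using assms by linarith+
    ultimately show "k \<in> {k::nat. lo \<le> real k \<and> real k \<le> hi}" by auto
  qed
  have "card {nat \<lceil>lo\<rceil>..nat \<lfloor>hi\<rfloor>} \<le> card {k::nat. lo \<le> real k \<and> real k \<le> hi}"
    by (rule card_mono[OF fin sub])
  moreover have "hi - lo - 1 \<le> real (card {nat \<lceil>lo\<rceil>..nat \<lfloor>hi\<rfloor>})"
  proof (cases "nat \<lceil>lo\<rceil> \<le> nat \<lfloor>hi\<rfloor>")
    case True
    then have "real (card {nat \<lceil>lo\<rceil>..nat \<lfloor>hi\<rfloor>}) = real (nat \<lfloor>hi\<rfloor>) + 1 - real (nat \<lceil>lo\<rceil>)"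
      by (simp add: of_nat_diff)
    then show ?thesis using assms by linarith
  next
    case False
    then show ?thesis using assms by linarith
  qed
  ultimately show ?thesis by linarith
qed

lemma sq_gt_of_abs_gt: "0 \<le> (R::real) \<Longrightarrow> R < \<bar>x\<bar> \<Longrightarrow> R^2 < x^2"
  by (metis abs_ge_zero abs_of_nonneg power2_abs power_strict_mono zero_less_numeral) 

lemma anti_conc:
  fixes m :: nat and s :: real
  assumes "1 \<le> s" "s \<le> real m"
  shows "(3/4) * 2^m * (s - 1) / (s + 2 * sqrt (real m)) \<le>
         (\<Sum>k\<in>{k. k \<le> m \<and> \<bar>real m - 2*real k\<bar> \<le> s}. real (m choose k))"
proof -
  define R where "R = 2 * sqrt (real m)"
  define Ks where "Ks = {k. k \<le> m \<and> \<bar>real m - 2*real k\<bar> \<le> s}"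
  define KR where "KR = {k. k \<le> m \<and> \<bar>real m - 2*real k\<bar> \<le> R}"
  define Out where "Out = KR - Ks"
  define Rest where "Rest = {..m} - KR"
  define C where "C = (\<lambda>k. real (m choose k))"
  have Cnn: "\<And>k. 0 \<le> C k" by (simp add: C_def)
  have m0: "m > 0" using assms by auto
  have R2: "R^2 = 4 * real m" by (simp add: R_def power_mult_distrib)
  have Rpos: "R > 0" using m0 by (simp add: R_def)
  have finKs: "finite Ks" by (rule finite_subset[of _ "{..m}"]) (auto simp: Ks_def)
  have finKR: "finite KR" by (rule finite_subset[of _ "{..m}"]) (auto simp: KR_def)
  have finOut: "finite Out" using finKR by (simp add: Out_def)
  have tot: "(\<Sum>k\<le>m. C k) = 2^m"
    using arg_cong[OF choose_row_sum[of m], of real] by (simp add: C_def)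
  have KRsub: "KR \<subseteq> {..m}" by (auto simp: KR_def)
  have split: "(\<Sum>k\<le>m. C k) = (\<Sum>k\<in>Rest. C k) + (\<Sum>k\<in>KR. C k)"
    unfolding Rest_def by (rule sum.subset_diff[OF KRsub]) simp
  have "(\<Sum>k\<in>Rest. C k) \<le> (\<Sum>k\<in>Rest. C k * (real m - 2*real k)^2 / R^2)"
  proof (rule sum_mono)
    fix k assume "k \<in> Rest"
    then have "R < \<bar>real m - 2*real k\<bar>" by (auto simp: Rest_def KR_def)
    then have "R^2 < (real m - 2*real k)^2" using sq_gt_of_abs_gt Rpos by auto
    then have "C k * R^2 \<le> C k * (real m - 2*real k)^2" using Cnn by (intro mult_left_mono) auto
    then show "C k \<le> C k * (real m - 2*real k)^2 / R^2" using Rpos by (simp add: le_divide_eq)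
  qed
  also have "\<dots> \<le> (\<Sum>k\<le>m. C k * (real m - 2*real k)^2 / R^2)"
    by (rule sum_mono2) (auto simp: Rest_def Cnn)
  also have "\<dots> = (\<Sum>k\<le>m. C k * (real m - 2*real k)^2) / R^2"
    by (simp add: sum_divide_distrib)
  also have "\<dots> = 2^m / 4" unfolding C_def cheb_sum R2 using m0 by simp
  finally have rest: "(\<Sum>k\<in>Rest. C k) \<le> 2^m / 4" .
  have KRsum: "3/4 * 2^m \<le> (\<Sum>k\<in>KR. C k)" using rest split tot by linarith
  have avg: "real (card Ks) * (\<Sum>j\<in>Out. C j) \<le> real (card Out) * (\<Sum>k\<in>Ks. C k)"
  proof -
    have "real (card Ks) * (\<Sum>j\<in>Out. C j) = (\<Sum>j\<in>Out. \<Sum>k\<in>Ks. C j)"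
      by (simp add: sum_distrib_right mult.commute)
    also have "\<dots> \<le> (\<Sum>j\<in>Out. \<Sum>k\<in>Ks. C k)"
    proof (intro sum_mono)
      fix j k assume j: "j \<in> Out" and k: "k \<in> Ks"
      then have "j \<le> m" "k \<le> m" "\<bar>real m - 2*real k\<bar> \<le> \<bar>real m - 2*real j\<bar>"
        by (auto simp: Out_def KR_def Ks_def)
      then show "C j \<le> C k" unfolding C_def using binom_sym_mono by simp
    qed
    also have "\<dots> = real (card Out) * (\<Sum>k\<in>Ks. C k)" by simp
    finally show ?thesis .
  qed
  have "(\<Sum>k\<in>KR. C k) = (\<Sum>k\<in>Out. C k) + (\<Sum>k\<in>KR \<inter> Ks. C k)"
    unfolding Out_def using sum.subset_diff[of "KR \<inter> Ks" KR C] finKR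
    by (simp add: Diff_Int)
  also have "(\<Sum>k\<in>KR \<inter> Ks. C k) \<le> (\<Sum>k\<in>Ks. C k)"
    by (rule sum_mono2[OF finKs]) (auto simp: Cnn)
  finally have KRle: "(\<Sum>k\<in>KR. C k) \<le> (\<Sum>k\<in>Out. C k) + (\<Sum>k\<in>Ks. C k)" by simp
  have cOut: "card Out \<le> card KR" unfolding Out_def by (rule card_mono[OF finKR]) auto
  have cKs: "s - 1 \<le> real (card Ks)"
  proof -
    have "Ks = {k::nat. (real m - s)/2 \<le> real k \<and> real k \<le> (real m + s)/2}"
      using assms by (auto simp: Ks_def abs_le_iff)
    moreover have "(real m + s)/2 - (real m - s)/2 - 1 \<le> real (card {k::nat. (real m - s)/2 \<le> real k \<and> real k \<le> (real m + s)/2})"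
      by (rule card_nat_interval_ge) (use assms in auto)
    ultimately show ?thesis by (simp add: field_simps)
  qed
  have cKR: "real (card KR) \<le> R + 1"
  proof -
    have "real (card KR) \<le> (real m + R)/2 - (real m - R)/2 + 1"
      by (rule card_nat_interval_le) (use Rpos in \<open>auto simp: KR_def abs_le_iff\<close>)
    then show ?thesis by (simp add: field_simps)
  qed
  define X where "X = real (card Ks)"
  define Y where "Y = real (card KR)"
  define \<sigma> where "\<sigma> = (\<Sum>k\<in>Ks. C k)"
  define A :: real where "A = 3/4 * 2^m"
  have \<sigma>nn: "0 \<le> \<sigma>" unfolding \<sigma>_def by (rule sum_nonneg) (simp add: Cnn)
  have Ann: "0 \<le> A" by (simp add: A_def)
  have X0: "0 \<le> X" "0 \<le> Y" by (simp_all add: X_def Y_def)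
  show ?thesis
  proof (cases "s = 1")
    case True
    then show ?thesis using \<sigma>nn by (simp add: \<sigma>_def C_def Ks_def)
  next
    case False
    then have s1: "s > 1" using assms by simp
    have Xpos: "X > 0" using cKs s1 by (simp add: X_def)
    have h1: "(s-1)*Y \<le> (s-1)*(R+1)" using cKR s1 by (intro mult_left_mono) (auto simp: Y_def)
    have h2: "(s-1)*(R+1) \<le> X*(R+1)" using cKs Rpos by (intro mult_right_mono) (auto simp: X_def)
    have h3: "(s-1)*(X+Y) \<le> (s+R)*X" using h1 h2 by (simp add: algebra_simps)
    have "X * (\<Sum>j\<in>Out. C j) \<le> Y * \<sigma>"
      using avg cOut \<sigma>nn unfolding X_def Y_def \<sigma>_def
      by (meson dual_order.trans mult_right_mono of_nat_le_iff)
    moreover have "A \<le> \<sigma> + (\<Sum>j\<in>Out. C j)" using KRsum KRle unfolding A_def \<sigma>_def by linarith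
    then have "X*A \<le> X*(\<sigma> + (\<Sum>j\<in>Out. C j))" using X0 by (intro mult_left_mono) auto
    ultimately have h4: "X*A \<le> (X+Y)*\<sigma>" by (simp add: algebra_simps)
    have "(X+Y)*(A*(s-1)) = A*((s-1)*(X+Y))" by (simp add: algebra_simps)
    also have "\<dots> \<le> A*((s+R)*X)" using h3 Ann by (rule mult_left_mono)
    also have "\<dots> = (s+R)*(X*A)" by (simp add: algebra_simps)
    also have "\<dots> \<le> (s+R)*((X+Y)*\<sigma>)" using h4 s1 Rpos by (intro mult_left_mono) auto
    also have "\<dots> = (X+Y)*((s+R)*\<sigma>)" by (simp add: algebra_simps)
    finally have "A*(s-1) \<le> (s+R)*\<sigma>" using Xpos X0 by (simp add: mult_le_cancel_left_pos)
    then have "A*(s-1)/(s+R) \<le> \<sigma>" using s1 Rpos by (simp add: divide_le_eq mult.commute)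
    then show ?thesis by (simp add: A_def \<sigma>_def C_def Ks_def R_def)
  qed
qed



definition sgnvec :: "'n set \<Rightarrow> real^'n" where
  "sgnvec A = (\<chi> i. if i \<in> A then -1 else 1)"

lemma sgnvec_inj: "inj sgnvec"
proof (rule injI)
  fix A B :: "'n::finite set"
  assume h: "sgnvec A = sgnvec B"
  show "A = B"
  proof (rule set_eqI)
    fix i
    have "sgnvec A $ i = sgnvec B $ i" using h by simp
    then show "i \<in> A \<longleftrightarrow> i \<in> B" by (auto simp: sgnvec_def split: if_splits)
  qed
qed

lemma sgnvec_cube: "sgnvec A \<in> sign_cube"
  by (simp add: sgnvec_def sign_cube_def)

lemma inner_sgnvec:
  fixes u :: "real^'n"
  shows "u \<bullet> sgnvec A = (\<Sum>i\<in>UNIV. u$i) - 2 * (\<Sum>i\<in>A. u$i)"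
proof -
  have "u \<bullet> sgnvec A = (\<Sum>i\<in>UNIV. u$i * (if i \<in> A then -1 else 1))"
    by (simp add: inner_vec_def sgnvec_def inner_real_def)
  also have "\<dots> = (\<Sum>i\<in>UNIV. u$i - 2 * (if i \<in> A then u$i else 0))"
    by (rule sum.cong) auto
  also have "\<dots> = (\<Sum>i\<in>UNIV. u$i) - 2 * (\<Sum>i\<in>UNIV. (if i \<in> A then u$i else 0))"
    by (simp add: sum_subtractf sum_distrib_left)
  also have "(\<Sum>i\<in>UNIV. (if i \<in> A then u$i else 0)) = (\<Sum>i\<in>A. u$i)"
    using sum.inter_restrict[of UNIV "\<lambda>i. u$i" A] by simp
  finally show ?thesis by simp
qed

lemma infdist_hyperplane:
  fixes w x :: "real^'n"
  assumes "w \<noteq> 0"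
  shows "infdist x {y. w \<bullet> y = 0} \<le> \<bar>w \<bullet> x\<bar> / norm w"
proof -
  define p where "p = x - ((w \<bullet> x) / (w \<bullet> w)) *\<^sub>R w"
  have ww: "w \<bullet> w = (norm w)^2" by (simp add: power2_norm_eq_inner)
  have nw: "norm w > 0" using assms by simp
  have "w \<bullet> p = 0" using assms by (simp add: p_def inner_diff_right)
  then have "infdist x {y. w \<bullet> y = 0} \<le> dist x p" by (intro infdist_le) simp
  also have "dist x p = \<bar>w \<bullet> x\<bar> / (w \<bullet> w) * norm w"
    by (simp add: p_def dist_norm)
  also have "\<dots> = \<bar>w \<bullet> x\<bar> / norm w" using nw unfolding ww by (simp add: power2_eq_square)
  finally show ?thesis .
qed



theorem lemma40:
  fixes \<epsilon> :: real
  assumes "\<epsilon> > 8 / sqrt (real CARD('n))"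
    and "\<epsilon> \<le> 1"
  shows "\<exists>(H :: (real ^ 'n) set) S. is_hyperplane H \<and> S \<subseteq> sign_cube \<and>
           real (card S) \<ge> \<epsilon> / 8 * 2 ^ CARD('n) \<and>
           (\<forall>x\<in>S. infdist x H \<le> 2 * \<epsilon> / sqrt (real CARD('n))) \<and>
           \<not> (\<exists>H'. is_hyperplane H' \<and> S \<subseteq> H')"
proof -
  define n where "n = CARD('n)"
  define r where "r = sqrt (real n)"
  have npos: "n > 0" by (simp add: n_def)
  have rpos: "r > 0" using npos by (simp add: r_def)
  have rr: "r^2 = real n" by (simp add: r_def)
  have er: "\<epsilon> * r > 8" using assms(1) rpos by (simp add: r_def n_def divide_less_eq mult.commute)
  have epos: "\<epsilon> > 0"
  proof (rule ccontr)
    assume "\<not> \<epsilon> > 0"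
    then have "\<epsilon> * r \<le> 0" using rpos by (simp add: mult_nonpos_nonneg)
    with er show False by simp
  qed
  have "\<epsilon> * r \<le> 1 * r" using assms(2) rpos by (intro mult_right_mono) auto
  then have r8: "r > 8" using er by simp
  have "8 * 8 < r * r" using r8 by (intro mult_strict_mono) auto
  then have "real n > 64" using rr by (simp add: power2_eq_square)
  then have n65: "n \<ge> 65" by simp
  define m where "m = n - 2"
  have mreal: "real m = real n - 2" using n65 by (simp add: m_def of_nat_diff)
  have mpos: "real m > 0" using mreal n65 by simp
  obtain a :: 'n where True by simp
  have "card (UNIV - {a}) = n - 1" by (simp add: n_def card_Diff_subset)
  then have "card (UNIV - {a}) > 0" using n65 by simp
  then have "UNIV - {a} \<noteq> {}" by (metis card.empty less_irrefl)
  then obtain b where "b \<in> UNIV - {a}" by blast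
  then have ab: "a \<noteq> b" by auto
  define tail where "tail = UNIV - {a,b}"
  have ctail: "card tail = m" using ab by (simp add: tail_def m_def n_def card_Diff_subset)
  have atail: "a \<notin> tail" "b \<notin> tail" by (auto simp: tail_def)
  define s where "s = 4/3 * \<epsilon> * r"
  have s3: "s \<ge> 3" using er by (simp add: s_def)
  define \<eta> where "\<eta> = 2 / real m"
  have \<eta>m: "\<eta> * real m = 2" using mpos by (simp add: \<eta>_def)
  have \<eta>pos: "\<eta> > 0" using mpos by (simp add: \<eta>_def)
  define w :: "real^'n" where "w = (\<chi> i. if i = a then 1 else if i = b then -1 else \<eta>)"
  define H where "H = {y. w \<bullet> y = 0}"
  define Fam where "Fam = {B. B \<subseteq> tail \<and> \<bar>real m - 2 * real (card B)\<bar> \<le> s}"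
  define g where "g = (\<lambda>B. B \<union> {a,b})"
  define G where "G = Fam \<union> g ` Fam"
  define x0 where "x0 = sgnvec (UNIV - {a})"
  define S where "S = insert x0 (sgnvec ` G)"
  have wsum: "\<And>C. (\<Sum>i\<in>C. w$i) = (if a\<in>C then 1 else 0) + (if b\<in>C then -1 else 0) + \<eta> * real (card (C \<inter> tail))"
  proof -
    fix C :: "'n set"
    have wi: "\<And>i. w$i = (if i = a then 1 else 0) + (if i = b then -1 else 0) + (if i \<in> tail then \<eta> else 0)"
      using ab by (auto simp: w_def tail_def)
    have "(\<Sum>i\<in>C. w$i) = (\<Sum>i\<in>C. (if i = a then 1 else 0)) + (\<Sum>i\<in>C. (if i = b then -1 else 0)) + (\<Sum>i\<in>C. (if i \<in> tail then \<eta> else 0))"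
      unfolding wi by (simp add: sum.distrib)
    also have "(\<Sum>i\<in>C. (if i \<in> tail then \<eta> else 0)) = (\<Sum>i\<in>C \<inter> tail. \<eta>)"
      using sum.inter_restrict[of C "\<lambda>i. \<eta>" tail] by simp
    finally show "(\<Sum>i\<in>C. w$i) = (if a\<in>C then 1 else 0) + (if b\<in>C then -1 else 0) + \<eta> * real (card (C \<inter> tail))"
      by (simp add: mult.commute)
  qed
  have wall: "(\<Sum>i\<in>UNIV. w$i) = 2" using wsum[of UNIV] ctail \<eta>m by simp
  have wB: "w \<bullet> sgnvec B = \<eta> * (real m - 2 * real (card B))" if "B \<subseteq> tail" for B
  proof -
    have "B \<inter> tail = B" "a \<notin> B" "b \<notin> B" using that atail by auto
    then have "(\<Sum>i\<in>B. w$i) = \<eta> * real (card B)" using wsum[of B] by simp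
    then show ?thesis using wall \<eta>m by (simp add: inner_sgnvec algebra_simps)
  qed
  have wBab: "w \<bullet> sgnvec (g B) = \<eta> * (real m - 2 * real (card B))" if "B \<subseteq> tail" for B
  proof -
    have "g B \<inter> tail = B" "a \<in> g B" "b \<in> g B" using that atail by (auto simp: g_def tail_def)
    then have "(\<Sum>i\<in>g B. w$i) = \<eta> * real (card B)" using wsum[of "g B"] by simp
    then show ?thesis using wall \<eta>m by (simp add: inner_sgnvec algebra_simps)
  qed
  have wx0: "w \<bullet> x0 = 0"
  proof -
    have "(UNIV - {a}) \<inter> tail = tail" by (auto simp: tail_def)
    then have "(\<Sum>i\<in>UNIV - {a}. w$i) = 1" using wsum[of "UNIV - {a}"] ab ctail \<eta>m by simp
    then show ?thesis using wall by (simp add: x0_def inner_sgnvec)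
  qed
  have wne: "w \<noteq> 0"
  proof
    assume "w = 0"
    then have "w $ a = 0" by simp
    then show False by (simp add: w_def)
  qed
  show ?thesis
  proof (intro exI conjI)
    show "is_hyperplane H"
      unfolding is_hyperplane_def H_def using wne
      by (simp add: affine_hyperplane aff_dim_hyperplane)
    show "S \<subseteq> sign_cube" by (auto simp: S_def x0_def sgnvec_cube)
    show "real (card S) \<ge> \<epsilon> / 8 * 2 ^ CARD('n)"
      proof -
      have finFam: "finite Fam" by (rule finite_subset[of _ "Pow tail"]) (auto simp: Fam_def)
      have ginj: "inj_on g Fam"
      proof (rule inj_onI)
        fix B1 B2 assume h: "B1 \<in> Fam" "B2 \<in> Fam" "g B1 = g B2"
        then have "g B1 - {a,b} = g B2 - {a,b}" by simp
        moreover have "g B1 - {a,b} = B1" "g B2 - {a,b} = B2" using h(1,2) atail by (auto simp: g_def Fam_def)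
        ultimately show "B1 = B2" by simp
      qed
      have disj: "Fam \<inter> g ` Fam = {}" using atail by (auto simp: g_def Fam_def)
      have cG: "card G = 2 * card Fam"
        using card_Un_disjoint[OF finFam finite_imageI[OF finFam] disj] card_image[OF ginj] by (simp add: G_def)
      have finG: "finite G" using finFam by (simp add: G_def)
      have cSG: "card (sgnvec ` G) = card G"
        by (rule card_image) (rule inj_on_subset[OF sgnvec_inj], simp)
      have cS: "card (sgnvec ` G) \<le> card S" unfolding S_def by (metis card_insert_le finG finite_imageI)
      define Ks where "Ks = {k. k \<le> m \<and> \<bar>real m - 2*real k\<bar> \<le> s}"
      have cle: "\<And>B. B \<subseteq> tail \<Longrightarrow> card B \<le> m" using ctail by (metis card_mono finite)
      have FamU: "Fam = (\<Union>k\<in>Ks. {B. B \<subseteq> tail \<and> card B = k})"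
        using cle by (auto simp: Fam_def Ks_def)
      have finKs: "finite Ks" by (rule finite_subset[of _ "{..m}"]) (auto simp: Ks_def)
      have "card (\<Union>k\<in>Ks. {B. B \<subseteq> tail \<and> card B = k}) = (\<Sum>k\<in>Ks. card {B. B \<subseteq> tail \<and> card B = k})"
        by (rule card_UN_disjoint[OF finKs]) (auto intro: finite_subset[of _ "Pow tail"])
      also have "\<dots> = (\<Sum>k\<in>Ks. m choose k)" using ctail by (simp add: n_subsets)
      finally have cFam: "real (card Fam) = (\<Sum>k\<in>Ks. real (m choose k))" unfolding FamU by simp
      have sdef': "s = 4/3 * (\<epsilon> * r)" by (simp add: s_def)
      have "\<epsilon> * r \<le> 1 * r" using assms(2) rpos by (intro mult_right_mono) auto
      then have err: "\<epsilon> * r \<le> r" by simp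
      have "8 * r < r * r" using r8 rpos by (intro mult_strict_right_mono) auto
      moreover have "r * r = real n" using rr by (simp add: power2_eq_square)
      ultimately have sm: "s \<le> real m" using mreal err sdef' r8 by linarith
      have acK: "3/4 * 2^m * (s - 1) / (s + 2 * sqrt (real m)) \<le> (\<Sum>k\<in>Ks. real (m choose k))"
        unfolding Ks_def by (rule anti_conc) (use s3 sm in auto)
      define D where "D = s + 2 * sqrt (real m)"
      have "sqrt (real m) \<ge> 0" by simp
      then have Dpos: "D > 0" using s3 unfolding D_def by linarith
      have srm: "sqrt (real m) \<le> r" unfolding r_def using mreal by simp
      have "\<epsilon> * s \<le> 1 * s" using assms(2) s3 by (intro mult_right_mono) auto
      then have q1: "\<epsilon> * s \<le> s" by simp
      have q2: "\<epsilon> * sqrt (real m) \<le> \<epsilon> * r" using srm epos by (intro mult_left_mono) auto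
      have "\<epsilon> * D = \<epsilon> * s + 2 * (\<epsilon> * sqrt (real m))" by (simp add: D_def algebra_simps)
      then have qa: "\<epsilon> * D \<le> s + 2 * (\<epsilon> * r)" using q1 q2 by linarith
      have qb: "s + 2 * (\<epsilon> * r) \<le> 3 * (s - 1)" using er unfolding sdef' by (simp add: algebra_simps)
      have q: "\<epsilon> * D \<le> 3 * (s - 1)" using qa qb by linarith
      have cn: "CARD('n) = m + 2" using n65 by (simp add: m_def n_def)
      have p2: "(2::real) ^ CARD('n) = 4 * 2^m" unfolding cn by (simp add: power_add)
      have e1: "\<epsilon> / 8 * (4 * 2^m) = (2^m / (2*D)) * (\<epsilon> * D)" using Dpos by (simp add: field_simps)
      have e2: "2 * (3/4 * 2^m * (s - 1) / D) = (2^m / (2*D)) * (3 * (s - 1))" using Dpos by (simp add: field_simps)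
      have "\<epsilon> / 8 * 2 ^ CARD('n) \<le> 2 * (3/4 * 2^m * (s - 1) / D)"
        unfolding p2 e1 e2 using q Dpos by (intro mult_left_mono) auto
      also have "\<dots> \<le> 2 * real (card Fam)" using acK cFam by (simp add: D_def)
      also have "\<dots> = real (card (sgnvec ` G))" using cSG cG by simp
      also have "\<dots> \<le> real (card S)" using cS by simp
      finally show ?thesis .
    qed
    show "\<forall>x\<in>S. infdist x H \<le> 2 * \<epsilon> / sqrt (real CARD('n))"
      proof
      have "(\<Sum>i\<in>{a,b}. (w$i)^2) \<le> (\<Sum>i\<in>UNIV. (w$i)^2)" by (rule sum_mono2) auto
      moreover have "(\<Sum>i\<in>{a,b}. (w$i)^2) = 2" using ab by (simp add: w_def)
      moreover have "(norm w)^2 = (\<Sum>i\<in>UNIV. (w$i)^2)"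
      proof -
        have "(norm w)^2 = w \<bullet> w" by (rule power2_norm_eq_inner)
        also have "\<dots> = (\<Sum>i\<in>UNIV. w$i * w$i)" by (simp add: inner_vec_def inner_real_def)
        finally show ?thesis by (simp add: power2_eq_square)
      qed
      moreover have "(7/5::real)^2 \<le> 2" by (simp add: power2_eq_square)
      ultimately have "(7/5)^2 \<le> (norm w)^2" by linarith
      then have nw: "7/5 \<le> norm w" by (rule power2_le_imp_le) simp
      have key: "40 * real n \<le> 42 * real m" using mreal n65 by simp
      have rrn: "r * r = real n" using rr by (simp add: power2_eq_square)
      have f1: "\<eta> * s / (7/5) = (\<epsilon> * r) * (40 / (21 * real m))" using mpos by (simp add: \<eta>_def s_def field_simps)
      have f2: "2 * \<epsilon> / r = (\<epsilon> * r) * (2 / real n)" using rpos rrn[symmetric] by (simp add: field_simps)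
      have f3: "40 / (21 * real m) \<le> 2 / real n" using key mpos npos by (simp add: divide_simps)
      have bound: "\<eta> * s / (7/5) \<le> 2 * \<epsilon> / r"
        unfolding f1 f2 using f3 epos rpos by (intro mult_left_mono) auto
      have rn: "sqrt (real CARD('n)) = r" by (simp add: r_def n_def)
      fix x assume "x \<in> S"
      then have "infdist x H \<le> \<bar>w \<bullet> x\<bar> / norm w" unfolding H_def by (intro infdist_hyperplane wne)
      also have "\<bar>w \<bullet> x\<bar> / norm w \<le> \<eta> * s / (7/5)"
      proof (rule frac_le)
        show "0 \<le> \<eta> * s" using \<eta>pos s3 by simp
        show "\<bar>w \<bullet> x\<bar> \<le> \<eta> * s"
        proof -
          have "x = x0 \<or> (\<exists>B\<in>Fam. x = sgnvec B \<or> x = sgnvec (g B))" using \<open>x \<in> S\<close> by (auto simp: S_def G_def)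
          then show ?thesis
          proof
            assume "x = x0" then show ?thesis using wx0 \<eta>pos s3 by simp
          next
            assume "\<exists>B\<in>Fam. x = sgnvec B \<or> x = sgnvec (g B)"
            then obtain B where B: "B \<subseteq> tail" "\<bar>real m - 2 * real (card B)\<bar> \<le> s" "x = sgnvec B \<or> x = sgnvec (g B)"
              by (auto simp: Fam_def)
            then have "\<bar>w \<bullet> x\<bar> = \<eta> * \<bar>real m - 2 * real (card B)\<bar>" using wB wBab \<eta>pos by (auto simp: abs_mult)
            also have "\<dots> \<le> \<eta> * s" using B(2) \<eta>pos by (intro mult_left_mono) auto
            finally show ?thesis .
          qed
        qed
      qed (use nw in auto)
      also have "\<dots> \<le> 2 * \<epsilon> / sqrt (real CARD('n))" using bound rn by simp
      finally show "infdist x H \<le> 2 * \<epsilon> / sqrt (real CARD('n))" .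
    qed
    show "\<not> (\<exists>H'. is_hyperplane H' \<and> S \<subseteq> H')"
      proof
      assume "\<exists>H'. is_hyperplane H' \<and> S \<subseteq> H'"
      then obtain H' where hH: "is_hyperplane H'" "S \<subseteq> H'" by blast
      have "aff_dim H' = int (DIM(real^'n)) - 1" using hH(1) by (simp add: is_hyperplane_def)
      then obtain u c where u: "u \<noteq> 0" "affine hull H' = {x. u \<bullet> x = c}"
        using aff_dim_eq_hyperplane[of H'] by auto
      have onS: "\<And>y. y \<in> S \<Longrightarrow> u \<bullet> y = c" using hH(2) hull_subset[of H' affine] u(2) by blast
      define U where "U = (\<Sum>i\<in>UNIV. u$i)"
      have key: "(\<Sum>i\<in>C. u$i) = (U - c)/2" if "sgnvec C \<in> S" for C
      proof -
        have "u \<bullet> sgnvec C = c" using onS that by blast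
        then have "U - 2*(\<Sum>i\<in>C. u$i) = c" unfolding inner_sgnvec U_def .
        then show ?thesis by simp
      qed
      define k0 where "k0 = m div 2"
      have "k0 \<le> card tail" by (simp add: ctail k0_def)
      then obtain B0 where B0: "B0 \<subseteq> tail" "card B0 = k0" "finite B0" by (rule obtain_subset_with_card_n)
      have "m = 2*k0 \<or> m = 2*k0+1" by (simp add: k0_def) arith
      then have k0r: "\<bar>real m - 2 * real k0\<bar> \<le> 1" by auto
      have mem1: "sgnvec B \<in> S" if "B \<subseteq> tail" "\<bar>real m - 2*real (card B)\<bar> \<le> s" for B
        using that by (auto simp: S_def G_def Fam_def)
      have mem2: "sgnvec (g B) \<in> S" if "B \<subseteq> tail" "\<bar>real m - 2*real (card B)\<bar> \<le> s" for B
        using that by (auto simp: S_def G_def Fam_def)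
      have sB0: "(\<Sum>i\<in>B0. u$i) = (U - c)/2" using key mem1 B0 k0r s3 by simp
      have ut: "u$i = 0" if "i \<in> tail" for i
      proof (cases "i \<in> B0")
        case False
        have "card (insert i B0) = k0 + 1" using False B0 by simp
        then have "\<bar>real m - 2*real (card (insert i B0))\<bar> \<le> s" using k0r s3 by auto
        then have "(\<Sum>j\<in>insert i B0. u$j) = (U - c)/2" using key mem1 B0 that by simp
        moreover have "(\<Sum>j\<in>insert i B0. u$j) = u$i + (\<Sum>j\<in>B0. u$j)" using False B0 by simp
        ultimately show ?thesis using sB0 by linarith
      next
        case True
        then have k1: "k0 \<ge> 1" using B0 by (metis card_0_eq empty_iff less_one not_le)
        have "card (B0 - {i}) = k0 - 1" using True B0 by simp
        then have "real (card (B0 - {i})) = real k0 - 1" using k1 by (simp add: of_nat_diff)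
        then have "\<bar>real m - 2*real (card (B0 - {i}))\<bar> \<le> s" using k0r s3 by auto
        then have "(\<Sum>j\<in>B0 - {i}. u$j) = (U - c)/2" using B0 by (intro key mem1) auto
        moreover have "(\<Sum>j\<in>B0. u$j) = u$i + (\<Sum>j\<in>B0 - {i}. u$j)" using True B0 by (simp add: sum.remove)
        ultimately show ?thesis using sB0 by linarith
      qed
      have z: "(\<Sum>i\<in>B0. u$i) = 0" using B0 ut by (intro sum.neutral) auto
      have Uc: "(U - c)/2 = 0" using z sB0 by simp
      have "g B0 = insert a (insert b B0)" by (auto simp: g_def)
      moreover have "a \<notin> insert b B0" "b \<notin> B0" using ab B0 atail by auto
      ultimately have "(\<Sum>i\<in>g B0. u$i) = u$a + u$b + (\<Sum>i\<in>B0. u$i)" using B0 by simp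
      moreover have "(\<Sum>i\<in>g B0. u$i) = (U - c)/2" using key mem2 B0 k0r s3 by simp
      ultimately have ab0: "u$a + u$b = 0" using z Uc by simp
      have "UNIV - {a} = insert b tail" using ab by (auto simp: tail_def)
      then have "(\<Sum>i\<in>UNIV - {a}. u$i) = u$b + (\<Sum>i\<in>tail. u$i)" using atail by simp
      also have "(\<Sum>i\<in>tail. u$i) = 0" using ut by (intro sum.neutral) auto
      finally have "u$b = (\<Sum>i\<in>UNIV - {a}. u$i)" by simp
      also have "\<dots> = 0" using key[of "UNIV - {a}"] Uc by (simp add: S_def x0_def)
      finally have ub: "u$b = 0" .
      have "u = 0"
      proof (rule vec_eq_iff[THEN iffD2], intro allI)
        fix i
        show "u$i = 0$i"
        proof (cases "i = a \<or> i = b")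
          case True then show ?thesis using ab0 ub by auto
        next
          case False then show ?thesis using ut by (auto simp: tail_def)
        qed
      qed
      with u(1) show False by simp
    qed
  qed
qed

end
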